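(* Let $\mathcal{M}^2$ be the set of all maskable observables on $\mathbb{C}^2$, i.e. Hermitian $2\times2$ matrices $\mathcal{O}$ for which there exists some quantum channel $\mathcal{E}$ with $\mathcal{E}^*(\mathcal{O})=\mathbb{I}$. Then there is no single quantum channel $\mathcal{E}$ on $2\times 2$ matrices such that $\mathcal{E}^*(\mathcal{O})=\mathbb{I}$ for all $\mathcal{O}\in\mathcal{M}^2$.
   Context: A quantum channel $\mathcal{E}$ is a linear completely positive trace-preserving map on $d\times d$ complex matrices, $\mathcal{E}(\rho)=\sum_i E_i\rho E_i^\dagger$ with $\sum_i E_i^\dagger E_i=\mathbb{I}$; its adjoint is $\mathcal{E}^*(X)=\sum_i E_i^\dagger X E_i$, so that $\operatorname{Tr}(\mathcal{E}(\rho)X)=\operatorname{Tr}(\rho\,\mathcal{E}^*(X))$. An observable is a Hermitian matrix. *)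

theory Defs
  imports "HOL-Analysis.Analysis"
begin

definition mat_adj :: "complex^'n^'m \<Rightarrow> complex^'m^'n" where
  "mat_adj A = (\<chi> i j. cnj (A $ j $ i))"

definition hermitian :: "complex^'n^'n \<Rightarrow> bool" where
  "hermitian A \<longleftrightarrow> mat_adj A = A"

text \<open>A quantum channel given by a (finite) list of Kraus operators
  with sum of E_i^dagger E_i equal to the identity.\<close>
definition is_channel :: "(complex^'n^'n) list \<Rightarrow> bool" where
  "is_channel Es \<longleftrightarrow> (\<Sum>E\<leftarrow>Es. mat_adj E ** E) = mat 1"

definition channel_apply :: "(complex^'n^'n) list \<Rightarrow> complex^'n^'n \<Rightarrow> complex^'n^'n" where
  "channel_apply Es \<rho> = (\<Sum>E\<leftarrow>Es. E ** \<rho> ** mat_adj E)"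

definition channel_adj :: "(complex^'n^'n) list \<Rightarrow> complex^'n^'n \<Rightarrow> complex^'n^'n" where
  "channel_adj Es X = (\<Sum>E\<leftarrow>Es. mat_adj E ** X ** E)"

definition maskable :: "complex^'n^'n \<Rightarrow> bool" where
  "maskable Ob \<longleftrightarrow> hermitian Ob \<and> (\<exists>Es. is_channel Es \<and> channel_adj Es Ob = mat 1)"

end

theory Submission
  imports Defs
begin

lemma rdist: "((A::'a::semiring_1^'n^'m) + B) ** (C::'a^'p^'n) = A ** C + B ** C"
  by (simp add: matrix_matrix_mult_def vec_eq_iff sum.distrib[symmetric] field_simps)

lemma adj_add: "channel_adj Es (A + B) = channel_adj Es A + channel_adj Es B"
  unfolding channel_adj_def
  by (induction Es) (simp_all add: matrix_add_ldistrib rdist algebra_simps)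

lemma adj_one: "is_channel Es \<Longrightarrow> channel_adj Es (mat 1) = mat 1"
  unfolding channel_adj_def is_channel_def by (simp add: matrix_mul_rid)

definition P :: "2 \<Rightarrow> complex^2^2" where
  "P k = (\<chi> i j. if i = k \<and> j = k then 1 else 0)"

definition K :: "2 \<Rightarrow> 2 \<Rightarrow> complex^2^2" where
  "K k l = (\<chi> i j. if i = k \<and> j = l then 1 else 0)"

lemma P_sum: "P 1 + P 2 = mat 1"
  unfolding P_def by (simp add: vec_eq_iff forall_2 mat_def)

lemma maskP: "maskable (P k)"
proof -
  have k: "k = 1 \<or> k = 2" using exhaust_2 by blast
  have "hermitian (P k)"
    unfolding hermitian_def mat_adj_def P_def by (simp add: vec_eq_iff forall_2)
  moreover have "is_channel [K k 1, K k 2]"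
    using k unfolding is_channel_def mat_adj_def K_def
    by (elim disjE; (simp add: vec_eq_iff forall_2 mat_def matrix_matrix_mult_def UNIV_2))
  moreover have "channel_adj [K k 1, K k 2] (P k) = mat 1"
    using k unfolding channel_adj_def mat_adj_def K_def P_def
    by (elim disjE; (simp add: vec_eq_iff forall_2 mat_def matrix_matrix_mult_def UNIV_2))
  ultimately show ?thesis unfolding maskable_def by blast
qed

theorem theorem2:
  shows "\<not> (\<exists>Es :: (complex^2^2) list. is_channel Es \<and>
            (\<forall>Ob :: complex^2^2. maskable Ob \<longrightarrow> channel_adj Es Ob = mat 1))"
proof
  assume "\<exists>Es :: (complex^2^2) list. is_channel Es \<and>
            (\<forall>Ob :: complex^2^2. maskable Ob \<longrightarrow> channel_adj Es Ob = mat 1)"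
  then obtain Es :: "(complex^2^2) list" where c: "is_channel Es"
    and h: "\<And>Ob. maskable Ob \<Longrightarrow> channel_adj Es Ob = mat 1" by blast
  have "mat 1 = channel_adj Es (P 1 + P 2)" using adj_one[OF c] P_sum by simp
  also have "\<dots> = mat 1 + mat 1" by (simp only: adj_add h maskP)
  finally have z: "(mat 1 :: complex^2^2) = 0" by simp
  have "(mat 1::complex^2^2) $ 1 $ 1 = 1" by (simp add: mat_def)
  then show False using z by simp
qed

end
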